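(* Let $T$ be a finite tree and let $L$ be the set of pendant edges of $T$. Then $\mathrm{gp_e}(T) = |L|$.
   Context: A pendant vertex is a vertex of degree one; a pendant edge is an edge incident to a pendant vertex. A set $S$ of edges of a graph $G$ is an edge general position set if no geodesic (shortest path) of $G$ contains three edges of $S$; $\mathrm{gp_e}(G)$ is the maximum cardinality of an edge general position set of $G$. *)

theory Defs
  imports Main
begin

definition simple_graph :: "'a set \<Rightarrow> 'a set set \<Rightarrow> bool" where
  "simple_graph V E \<longleftrightarrow> finite V \<and>
     (\<forall>e\<in>E. \<exists>u v. e = {u, v} \<and> u \<noteq> v \<and> u \<in> V \<and> v \<in> V)"

fun walk_edges :: "'a list \<Rightarrow> 'a set list" where
  "walk_edges (u # v # vs) = {u, v} # walk_edges (v # vs)"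
| "walk_edges _ = []"

definition is_path :: "'a set \<Rightarrow> 'a set set \<Rightarrow> 'a list \<Rightarrow> bool" where
  "is_path V E p \<longleftrightarrow> p \<noteq> [] \<and> set p \<subseteq> V \<and> distinct p \<and> set (walk_edges p) \<subseteq> E"

definition connected_graph :: "'a set \<Rightarrow> 'a set set \<Rightarrow> bool" where
  "connected_graph V E \<longleftrightarrow>
     (\<forall>u\<in>V. \<forall>v\<in>V. \<exists>p. is_path V E p \<and> hd p = u \<and> last p = v)"

definition is_cycle :: "'a set \<Rightarrow> 'a set set \<Rightarrow> 'a list \<Rightarrow> bool" where
  "is_cycle V E c \<longleftrightarrow> length c \<ge> 3 \<and> is_path V E c \<and> {last c, hd c} \<in> E"

definition is_tree :: "'a set \<Rightarrow> 'a set set \<Rightarrow> bool" where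
  "is_tree V E \<longleftrightarrow> simple_graph V E \<and> V \<noteq> {} \<and> connected_graph V E \<and>
     \<not> (\<exists>c. is_cycle V E c)"

definition is_geodesic :: "'a set \<Rightarrow> 'a set set \<Rightarrow> 'a list \<Rightarrow> bool" where
  "is_geodesic V E p \<longleftrightarrow> is_path V E p \<and>
     (\<forall>q. is_path V E q \<and> hd q = hd p \<and> last q = last p \<longrightarrow> length p \<le> length q)"

definition degree :: "'a set set \<Rightarrow> 'a \<Rightarrow> nat" where
  "degree E v = card {e \<in> E. v \<in> e}"

definition pendant_edges :: "'a set \<Rightarrow> 'a set set \<Rightarrow> 'a set set" where
  "pendant_edges V E = {e \<in> E. \<exists>v\<in>e. v \<in> V \<and> degree E v = 1}"

definition edge_gp_set :: "'a set \<Rightarrow> 'a set set \<Rightarrow> 'a set set \<Rightarrow> bool" where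
  "edge_gp_set V E S \<longleftrightarrow> S \<subseteq> E \<and>
     (\<forall>p. is_geodesic V E p \<longrightarrow> card (set (walk_edges p) \<inter> S) \<le> 2)"

definition gp_e :: "'a set \<Rightarrow> 'a set set \<Rightarrow> nat" where
  "gp_e V E = Max {card S | S. edge_gp_set V E S}"

end

theory Submission
  imports Defs
begin

lemma walk_edges_append:
  "walk_edges (xs @ ys) = walk_edges xs @ (if xs \<noteq> [] \<and> ys \<noteq> [] then [{last xs, hd ys}] else []) @ walk_edges ys"
proof (induction xs rule: walk_edges.induct)
  case (1 u v vs) then show ?case by simp
next
  case ("2_1") then show ?case by simp
next
  case ("2_2" u) then show ?case by (cases ys) auto
qed

lemma walk_edges_append2:
  "ys \<noteq> [] \<Longrightarrow> set (walk_edges (xs @ ys)) = set (walk_edges (xs @ [hd ys])) \<union> set (walk_edges ys)"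
  by (cases ys) (auto simp: walk_edges_append)

lemma walk_edges_nth:
  "set (walk_edges p) = {{p!i, p!Suc i} | i. Suc i < length p}"
proof (induction p rule: walk_edges.induct)
  case (1 u v vs)
  have "{{(u # v # vs)!i, (u # v # vs)!Suc i} | i. Suc i < length (u # v # vs)}
     = insert {u,v} {{(v # vs)!i, (v # vs)!Suc i} | i. Suc i < length (v # vs)}"
    (is "?L = ?R")
  proof
    show "?L \<subseteq> ?R"
    proof
      fix e assume "e \<in> ?L"
      then obtain i where i: "e = {(u # v # vs)!i, (u # v # vs)!Suc i}" "Suc i < length (u # v # vs)" by blast
      show "e \<in> ?R"
      proof (cases i)
        case 0 then show ?thesis using i by simp
      next
        case (Suc j) then show ?thesis using i by auto
      qed
    qed
  next
    show "?R \<subseteq> ?L"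
    proof
      fix e assume "e \<in> ?R"
      then consider "e = {u,v}" | j where "e = {(v # vs)!j, (v # vs)!Suc j}" "Suc j < length (v # vs)" by blast
      then show "e \<in> ?L"
      proof cases
        case 1 then show ?thesis by (auto intro!: exI[of _ 0])
      next
        case (2 j) then show ?thesis by (auto intro!: exI[of _ "Suc j"])
      qed
    qed
  qed
  then show ?case using 1 by simp
next
  case "2_1" then show ?case by simp
next
  case ("2_2" v) then show ?case by simp
qed

lemma walk_edges_rev: "set (walk_edges (rev p)) = set (walk_edges p)"
proof (induction p)
  case Nil then show ?case by simp
next
  case (Cons a p)
  then show ?case by (cases p) (auto simp: walk_edges_append insert_commute)
qed

lemma walk_edges_sub: "e \<in> set (walk_edges p) \<Longrightarrow> e \<subseteq> set p"
  by (auto simp: walk_edges_nth)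

lemma is_path_rev: "is_path V E p \<Longrightarrow> is_path V E (rev p)"
  by (auto simp: is_path_def walk_edges_rev)

lemma is_path_appendD1: "is_path V E (xs @ ys) \<Longrightarrow> xs \<noteq> [] \<Longrightarrow> is_path V E xs"
  by (auto simp: is_path_def walk_edges_append)

lemma is_path_appendD2: "is_path V E (xs @ ys) \<Longrightarrow> ys \<noteq> [] \<Longrightarrow> is_path V E ys"
  by (auto simp: is_path_def walk_edges_append)

lemma is_path_snoc: "is_path V E p \<Longrightarrow> y \<in> V \<Longrightarrow> y \<notin> set p \<Longrightarrow> {last p, y} \<in> E \<Longrightarrow> is_path V E (p @ [y])"
  by (auto simp: is_path_def walk_edges_append)

lemma is_path_mono: "is_path V E p \<Longrightarrow> V \<subseteq> V' \<Longrightarrow> E \<subseteq> E' \<Longrightarrow> is_path V' E' p"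
  by (auto simp: is_path_def)

lemma distinct_hd_last: "distinct p \<Longrightarrow> p \<noteq> [] \<Longrightarrow> hd p = last p \<Longrightarrow> p = [hd p]"
  by (cases p) (auto simp: last_ConsR split: if_splits)

lemma is_path_drop: "is_path V E p \<Longrightarrow> i < length p \<Longrightarrow> is_path V E (drop i p)"
  using is_path_appendD2[of V E "take i p" "drop i p"] by simp

lemma path_cycle:
  assumes p: "is_path V E (u # pm @ [t])" and q: "is_path V E (u # qm @ [t])"
    and disj: "set pm \<inter> set qm = {}" and ne: "pm \<noteq> [] \<or> qm \<noteq> []"
  shows "\<exists>c. is_cycle V E c"
proof -
  let ?c = "u # pm @ t # rev qm"
  have dp: "distinct (u # pm @ [t])" and dq: "distinct (u # qm @ [t])"
    using p q by (auto simp: is_path_def)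
  have "distinct ?c" using dp dq disj by auto
  moreover have "set ?c \<subseteq> V" using p q by (auto simp: is_path_def)
  moreover have "set (walk_edges ?c) \<subseteq> E"
  proof -
    have ep: "set (walk_edges (u # pm @ [t])) \<subseteq> E" and eq: "set (walk_edges (u # qm @ [t])) \<subseteq> E"
      using p q by (auto simp: is_path_def)
    have eq': "set (walk_edges (rev (u # qm @ [t]))) \<subseteq> E" using eq by (simp only: walk_edges_rev)
    have c: "?c = (u # pm) @ (t # rev qm)" by simp
    have "set (walk_edges (t # rev qm)) \<subseteq> E"
    proof -
      have "rev (u # qm @ [t]) = (t # rev qm) @ [u]" by simp
      then show ?thesis using eq' by (simp only: walk_edges_append) auto
    qed
    then show ?thesis using ep unfolding c by (subst walk_edges_append2) auto
  qed
  moreover have "{last ?c, hd ?c} \<in> E"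
  proof (cases qm)
    case Nil
    then have "{u, t} \<in> E" using q by (simp add: is_path_def)
    then show ?thesis using Nil by (simp add: insert_commute)
  next
    case (Cons y ys)
    then have "{u, y} \<in> E" using q unfolding is_path_def by auto
    then show ?thesis using Cons by (simp add: insert_commute)
  qed
  moreover have "length ?c \<ge> 3" using ne by (auto simp: Suc_le_eq)
  ultimately show ?thesis unfolding is_cycle_def is_path_def by (intro exI[of _ ?c]) auto
qed

lemma path_unique_aux:
  assumes acyc: "\<not> (\<exists>c. is_cycle V E c)"
  shows "length p + length q = n \<Longrightarrow> is_path V E p \<Longrightarrow> is_path V E q \<Longrightarrow> hd p = hd q \<Longrightarrow> last p = last q \<Longrightarrow> p = q"
proof (induction n arbitrary: p q rule: less_induct)
  case (less n)
  note P = less.prems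
  have pne: "p \<noteq> []" and qne: "q \<noteq> []" and dp: "distinct p" and dq: "distinct q"
    using P by (auto simp: is_path_def)
  show ?case
  proof (cases "\<exists>z. z \<in> set p \<and> z \<in> set q \<and> z \<noteq> hd p \<and> z \<noteq> last p")
    case True
    then obtain z where z: "z \<in> set p" "z \<in> set q" "z \<noteq> hd p" "z \<noteq> last p" by blast
    obtain p1 p2 where ps: "p = p1 @ z # p2" using z(1) by (meson split_list)
    obtain q1 q2 where qs: "q = q1 @ z # q2" using z(2) by (meson split_list)
    have p1: "p1 \<noteq> []" using z(3) ps by auto
    have q1: "q1 \<noteq> []" using z(3) qs P(4) by auto
    have p2: "p2 \<noteq> []" using z(4) ps by auto
    have q2: "q2 \<noteq> []" using z(4) qs P(5) by auto
    have a1: "is_path V E (p1 @ [z])" using P(2) ps is_path_appendD1[of V E "p1 @ [z]" p2] by simp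
    have a2: "is_path V E (q1 @ [z])" using P(3) qs is_path_appendD1[of V E "q1 @ [z]" q2] by simp
    have b1: "is_path V E (z # p2)" using P(2) ps is_path_appendD2[of V E p1 "z # p2"] by simp
    have b2: "is_path V E (z # q2)" using P(3) qs is_path_appendD2[of V E q1 "z # q2"] by simp
    have l1: "length (p1 @ [z]) + length (q1 @ [z]) < n" using P(1) ps qs p2 q2 by (simp add: length_greater_0_conv[symmetric] del: length_greater_0_conv)
    have l2: "length (z # p2) + length (z # q2) < n" using P(1) ps qs p1 q1 by (simp add: length_greater_0_conv[symmetric] del: length_greater_0_conv)
    have "p1 @ [z] = q1 @ [z]"
      by (rule less.IH[OF l1 refl a1 a2]) (use P p1 q1 ps qs in auto)
    moreover have "z # p2 = z # q2"
      by (rule less.IH[OF l2 refl b1 b2]) (use P p2 q2 ps qs in auto)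
    ultimately show ?thesis using ps qs by simp
  next
    case False
    note nf = False
    show ?thesis
    proof (cases "length p \<le> 1 \<or> length q \<le> 1")
      case True
      then show ?thesis
      proof
        assume "length p \<le> 1"
        then obtain u where "p = [u]" using pne by (cases p) auto
        then show ?thesis using distinct_hd_last[OF dq qne] P by simp
      next
        assume "length q \<le> 1"
        then obtain u where "q = [u]" using qne by (cases q) auto
        then show ?thesis using distinct_hd_last[OF dp pne] P by simp
      qed
    next
      case False
      obtain u p' where p': "p = u # p'" using pne by (cases p) auto
      obtain pm t where pm: "p' = pm @ [t]" using False p' by (cases p' rule: rev_cases) auto
      obtain q' where q': "q = u # q'" using qne P(4) p' by (cases q) auto
      obtain qm where qm: "q' = qm @ [t]" using False q' P(5) p' pm by (cases q' rule: rev_cases) auto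
      have pp: "is_path V E (u # pm @ [t])" and qq: "is_path V E (u # qm @ [t])"
        using P p' pm q' qm by auto
      have disj: "set pm \<inter> set qm = {}"
      proof (rule ccontr)
        assume "set pm \<inter> set qm \<noteq> {}"
        then obtain z where "z \<in> set pm" "z \<in> set qm" by blast
        moreover have "u \<notin> set pm" "t \<notin> set pm" using dp p' pm by auto
        ultimately show False using nf p' pm q' qm by auto
      qed
      show ?thesis
      proof (cases "pm = [] \<and> qm = []")
        case True then show ?thesis using p' pm q' qm by simp
      next
        case False
        then show ?thesis using path_cycle[OF pp qq disj] acyc by blast
      qed
    qed
  qed
qed

lemma path_unique:
  assumes "\<not> (\<exists>c. is_cycle V E c)" "is_path V E p" "is_path V E q" "hd p = hd q" "last p = last q"
  shows "p = q"
  using path_unique_aux[OF assms(1) refl assms(2-)] .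

lemma tree_geodesic:
  assumes "is_tree V E" "is_path V E p" shows "is_geodesic V E p"
  unfolding is_geodesic_def
proof (intro conjI allI impI)
  fix q assume "is_path V E q \<and> hd q = hd p \<and> last q = last p"
  then have "p = q" using path_unique[of V E p q] assms unfolding is_tree_def by auto
  then show "length p \<le> length q" by simp
qed (rule assms(2))

lemma tree_gp_iff:
  assumes "is_tree V E"
  shows "edge_gp_set V E S \<longleftrightarrow> S \<subseteq> E \<and> (\<forall>p. is_path V E p \<longrightarrow> card (set (walk_edges p) \<inter> S) \<le> 2)"
  using tree_geodesic[OF assms] unfolding edge_gp_set_def is_geodesic_def by blast

lemma simple_finite_E: "simple_graph V E \<Longrightarrow> finite E"
proof -
  assume a: "simple_graph V E"
  then have "E \<subseteq> Pow V" unfolding simple_graph_def by auto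
  moreover have "finite (Pow V)" using a unfolding simple_graph_def by simp
  ultimately show ?thesis by (rule finite_subset)
qed

lemma degree_1_iff:
  assumes "finite E"
  shows "degree E v = 1 \<longleftrightarrow> (\<exists>f. f \<in> E \<and> v \<in> f \<and> (\<forall>e\<in>E. v \<in> e \<longrightarrow> e = f))"
proof
  assume "degree E v = 1"
  then have "card {e \<in> E. v \<in> e} = 1" unfolding degree_def .
  then obtain f where f: "{e \<in> E. v \<in> e} = {f}" by (rule card_1_singletonE)
  have f1: "\<forall>e. e \<in> {e \<in> E. v \<in> e} \<longleftrightarrow> e \<in> {f}" using f by simp
  then have f2: "\<forall>e. (e \<in> E \<and> v \<in> e) = (e = f)" by simp
  show "\<exists>f. f \<in> E \<and> v \<in> f \<and> (\<forall>e\<in>E. v \<in> e \<longrightarrow> e = f)"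
    using f2 by metis
next
  assume "\<exists>f. f \<in> E \<and> v \<in> f \<and> (\<forall>e\<in>E. v \<in> e \<longrightarrow> e = f)"
  then obtain f where "f \<in> E" "v \<in> f" "\<forall>e\<in>E. v \<in> e \<longrightarrow> e = f" by blast
  then have "{e \<in> E. v \<in> e} = {f}" by blast
  then show "degree E v = 1" unfolding degree_def by simp
qed

lemma degree_ge2:
  assumes "finite E" "a \<in> E" "b \<in> E" "a \<noteq> b" "v \<in> a" "v \<in> b"
  shows "degree E v \<noteq> 1"
proof
  assume "degree E v = 1"
  then obtain f where "\<forall>e\<in>E. v \<in> e \<longrightarrow> e = f" using degree_1_iff[OF assms(1)] by blast
  then have "a = f" "b = f" using assms by auto
  then show False using assms(4) by simp
qed

lemma path_edge_nth: "is_path V E p \<Longrightarrow> Suc i < length p \<Longrightarrow> {p!i, p!Suc i} \<in> E"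
  unfolding is_path_def walk_edges_nth by blast

lemma path_interior:
  assumes "finite E" "is_path V E p" "0 < i" "Suc i < length p"
  shows "degree E (p!i) \<noteq> 1"
proof -
  have d: "distinct p" using assms(2) by (simp add: is_path_def)
  have e1: "{p!(i-1), p!i} \<in> E" using path_edge_nth[OF assms(2), of "i-1"] assms(3,4) by simp
  have e2: "{p!i, p!Suc i} \<in> E" using path_edge_nth[OF assms(2), of i] assms(4) by simp
  have "p!(i-1) \<noteq> p!Suc i" using d assms(3,4) by (simp add: nth_eq_iff_index_eq)
  moreover have "p!(i-1) \<noteq> p!i" using d assms(3,4) by (simp add: nth_eq_iff_index_eq)
  ultimately have "{p!(i-1), p!i} \<noteq> {p!i, p!Suc i}" by (auto simp: doubleton_eq_iff)
  then show ?thesis using degree_ge2[OF assms(1) e1 e2] by simp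
qed

lemma path_len_bound: "is_path V E p \<Longrightarrow> finite V \<Longrightarrow> length p \<le> card V"
proof -
  assume a: "is_path V E p" "finite V"
  then have "length p = card (set p)" by (simp add: is_path_def distinct_card)
  also have "\<dots> \<le> card V" using a by (intro card_mono) (auto simp: is_path_def)
  finally show ?thesis .
qed

lemma exists_leaf:
  assumes T: "is_tree V E" and v: "v \<in> V" and u: "u \<in> V" "u \<noteq> v"
  shows "\<exists>l\<in>V. l \<noteq> v \<and> degree E l = 1"
proof -
  have fV: "finite V" and fE: "finite E" using T simple_finite_E unfolding is_tree_def simple_graph_def by auto
  let ?P = "{q. is_path V E q \<and> hd q = v}"
  obtain p0 where p0: "is_path V E p0" "hd p0 = v" "last p0 = u"
    using T v u unfolding is_tree_def connected_graph_def by blast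
  have p0l: "length p0 \<ge> 2"
  proof (rule ccontr)
    assume "\<not> ?thesis"
    then obtain x where "p0 = [x]" using p0(1) unfolding is_path_def
      by (cases p0; cases "tl p0") auto
    then show False using p0 u by simp
  qed
  have bnd: "\<forall>p\<in>?P. length p \<le> card V" using path_len_bound fV by blast
  have fin: "finite (length ` ?P)"
    by (rule finite_subset[of _ "{..card V}"]) (use bnd in auto)
  have ne: "length ` ?P \<noteq> {}" using p0 by blast
  have "Max (length ` ?P) \<in> length ` ?P" by (rule Max_in[OF fin ne])
  then obtain p where pP: "p \<in> ?P" and pmax0: "Max (length ` ?P) = length p" by (rule imageE)
  have pmax: "length p = Max (length ` ?P)" using pmax0 by simp
  have pm: "\<And>q. q \<in> ?P \<Longrightarrow> length q \<le> length p" using pmax fin by simp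
  have path: "is_path V E p" and hp: "hd p = v" using pP by auto
  have dp: "distinct p" using path by (simp add: is_path_def)
  have lp: "length p \<ge> 2" using pm[of p0] p0 p0l by auto
  let ?n = "length p"
  let ?l = "last p"
  have lV: "?l \<in> V" using path lp unfolding is_path_def by (metis last_in_set subsetD)
  have lnv: "?l \<noteq> v"
  proof
    assume "?l = v"
    moreover have "p \<noteq> []" using lp by auto
    ultimately have "p = [hd p]" using distinct_hd_last[OF dp] hp by simp
    then have "length p = 1" by (metis length_Cons list.size(3) One_nat_def)
    then show False using lp by simp
  qed
  have lastn: "?l = p!(?n - 1)" using lp by (subst last_conv_nth) auto
  have "Suc (?n - 2) = ?n - 1" "Suc (?n - 2) < ?n" using lp by auto
  then have fe: "{p!(?n-2), ?l} \<in> E" using path_edge_nth[OF path, of "?n - 2"] lastn by simp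
  have uniq: "\<forall>e\<in>E. ?l \<in> e \<longrightarrow> e = {p!(?n-2), ?l}"
  proof (intro ballI impI)
    fix e assume eE: "e \<in> E" and le: "?l \<in> e"
    obtain a b where ab: "e = {a,b}" "a \<noteq> b" "a \<in> V" "b \<in> V"
      using T eE unfolding is_tree_def simple_graph_def by blast
    obtain y where y: "e = {?l, y}" "y \<noteq> ?l" "y \<in> V" using ab le by blast
    show "e = {p!(?n-2), ?l}"
    proof (cases "y \<in> set p")
      case False
      have "is_path V E (p @ [y])" using is_path_snoc[OF path y(3) False] eE y(1) by simp
      moreover have "hd (p @ [y]) = v" using hp lp by (cases p) auto
      ultimately have "length (p @ [y]) \<le> length p" using pm by blast
      then show ?thesis by simp
    next
      case True
      then obtain i where i: "i < ?n" "p!i = y" by (meson in_set_conv_nth)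
      have "i \<noteq> ?n - 1" using i y(2) lastn by auto
      show ?thesis
      proof (cases "i = ?n - 2")
        case True then show ?thesis using y i by (simp add: insert_commute)
      next
        case False
        let ?c = "drop i p"
        have "is_path V E ?c" using is_path_drop[OF path i(1)] .
        moreover have "length ?c \<ge> 3" using False \<open>i \<noteq> ?n - 1\<close> i(1) by simp
        moreover have "{last ?c, hd ?c} \<in> E" using i y eE by (simp add: hd_drop_conv_nth)
        ultimately have "is_cycle V E ?c" unfolding is_cycle_def by simp
        then show ?thesis using T unfolding is_tree_def by blast
      qed
    qed
  qed
  have "degree E ?l = 1" unfolding degree_1_iff[OF fE] using fe uniq by blast
  then show ?thesis using lV lnv by blast
qed

lemma card_le2: "X \<subseteq> {a, b} \<Longrightarrow> card X \<le> 2"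
proof -
  assume "X \<subseteq> {a, b}"
  then have "card X \<le> card {a, b}" by (intro card_mono) auto
  also have "\<dots> \<le> 2" by (simp add: card_insert_le_m1)
  finally show ?thesis .
qed

lemma pendant_gp:
  assumes T: "is_tree V E"
  shows "edge_gp_set V E (pendant_edges V E)"
proof -
  have fE: "finite E" using T simple_finite_E unfolding is_tree_def by auto
  have "card (set (walk_edges p) \<inter> pendant_edges V E) \<le> 2" if path: "is_path V E p" for p
  proof -
    let ?n = "length p"
    have "set (walk_edges p) \<inter> pendant_edges V E \<subseteq> {{p!0, p!1}, {p!(?n-2), p!(?n-1)}}"
    proof
      fix e assume e: "e \<in> set (walk_edges p) \<inter> pendant_edges V E"
      then obtain i where i: "e = {p!i, p!Suc i}" "Suc i < ?n" unfolding walk_edges_nth by blast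
      obtain x where x: "x \<in> e" "degree E x = 1" using e unfolding pendant_edges_def by blast
      show "e \<in> {{p!0, p!1}, {p!(?n-2), p!(?n-1)}}"
      proof (cases "x = p!i")
        case True
        then have "i = 0" using path_interior[OF fE path, of i] i x by (cases i) auto
        then show ?thesis using i by simp
      next
        case False
        then have "x = p!Suc i" using x i by auto
        then have "\<not> Suc (Suc i) < ?n" using path_interior[OF fE path, of "Suc i"] x by auto
        then have "i = ?n - 2" using i by simp
        then show ?thesis using i by (simp add: Suc_diff_Suc numeral_2_eq_2)
      qed
    qed
    then show ?thesis by (rule card_le2)
  qed
  moreover have "pendant_edges V E \<subseteq> E" unfolding pendant_edges_def by auto
  ultimately show ?thesis using tree_gp_iff[OF T] by blast
qed

lemma path_avoid_leaf:
  assumes fE: "finite E" and path: "is_path V E p" and l: "degree E l = 1"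
    and h: "hd p \<noteq> l" and t: "last p \<noteq> l"
  shows "l \<notin> set p"
proof
  assume "l \<in> set p"
  then obtain i where i: "i < length p" "p!i = l" by (meson in_set_conv_nth)
  have pne: "p \<noteq> []" using i by auto
  have "0 < i"
  proof (rule ccontr)
    assume "\<not> 0 < i"
    then have "i = 0" by simp
    then show False using h i pne by (simp add: hd_conv_nth)
  qed
  moreover have "Suc i \<noteq> length p"
  proof
    assume a: "Suc i = length p"
    then have "i = length p - 1" by simp
    then show False using t i pne by (simp add: last_conv_nth)
  qed
  ultimately show False using path_interior[OF fE path, of i] i l by simp
qed

lemma path_through_edge:
  assumes C: "connected_graph V E" and ab: "{a, b} \<in> E" "a \<in> V" "b \<in> V" "a \<noteq> b" and l: "l \<in> V"
  shows "\<exists>r. is_path V E r \<and> hd r = l \<and> {a, b} \<in> set (walk_edges r)"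
proof -
  obtain q where q: "is_path V E q" "hd q = l" "last q = a" using C l ab unfolding connected_graph_def by blast
  have qne: "q \<noteq> []" using q by (simp add: is_path_def)
  show ?thesis
  proof (cases "b \<in> set q")
    case False
    have r: "is_path V E (q @ [b])" using is_path_snoc[OF q(1) ab(3) False] q ab by simp
    moreover have "hd (q @ [b]) = l" using q qne by simp
    moreover have "{a, b} \<in> set (walk_edges (q @ [b]))" using q qne by (simp add: walk_edges_append)
    ultimately show ?thesis by blast
  next
    case True
    then obtain q1 q2 where qs: "q = q1 @ b # q2" by (meson split_list)
    have dq: "distinct q" using q by (simp add: is_path_def)
    have "a \<in> set (b # q2)" using q(3) qs by (metis last_appendR last_in_set list.distinct(1))
    then have anq1: "a \<notin> set (q1 @ [b])" using dq qs ab(4) by auto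
    have p1: "is_path V E (q1 @ [b])" using q(1) qs is_path_appendD1[of V E "q1 @ [b]" q2] by simp
    have r: "is_path V E ((q1 @ [b]) @ [a])" using is_path_snoc[OF p1 ab(2) anq1] ab by (simp add: insert_commute)
    moreover have "hd ((q1 @ [b]) @ [a]) = l" using q qs by (cases q1) auto
    moreover have "{a, b} \<in> set (walk_edges ((q1 @ [b]) @ [a]))" by (simp add: walk_edges_append insert_commute)
    ultimately show ?thesis by blast
  qed
qed

lemma leaf_unique:
  assumes "finite E" "degree E l = 1" "f \<in> E" "l \<in> f"
  shows "\<forall>e\<in>E. l \<in> e \<longrightarrow> e = f"
proof -
  obtain f0 where "\<forall>e\<in>E. l \<in> e \<longrightarrow> e = f0" using assms(2) degree_1_iff[OF assms(1)] by blast
  then show ?thesis using assms(3,4) by metis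
qed

lemma remove_leaf:
  assumes T: "is_tree V E" and lV: "l \<in> V" and dl: "degree E l = 1" and fE: "f \<in> E" and lf: "l \<in> f"
    and u: "u \<in> V" "u \<noteq> l"
  shows "is_tree (V - {l}) (E - {f})" "\<forall>e\<in>E - {f}. l \<notin> e"
proof -
  have fin: "finite E" using T simple_finite_E unfolding is_tree_def by auto
  have uniq: "\<forall>e\<in>E. l \<in> e \<longrightarrow> e = f" using leaf_unique[OF fin dl fE lf] .
  show nl: "\<forall>e\<in>E - {f}. l \<notin> e" using uniq by blast
  have sg: "simple_graph V E" using T unfolding is_tree_def by simp
  have "simple_graph (V - {l}) (E - {f})"
    unfolding simple_graph_def
  proof (intro conjI ballI)
    show "finite (V - {l})" using sg unfolding simple_graph_def by simp
  next
    fix e assume e: "e \<in> E - {f}"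
    then obtain a b where ab: "e = {a, b}" "a \<noteq> b" "a \<in> V" "b \<in> V" using sg unfolding simple_graph_def by blast
    moreover have "l \<notin> e" using nl e by blast
    ultimately show "\<exists>a b. e = {a, b} \<and> a \<noteq> b \<and> a \<in> V - {l} \<and> b \<in> V - {l}" by blast
  qed
  moreover have "V - {l} \<noteq> {}" using u by blast
  moreover have "connected_graph (V - {l}) (E - {f})"
    unfolding connected_graph_def
  proof (intro ballI)
    fix x y assume x: "x \<in> V - {l}" and y: "y \<in> V - {l}"
    obtain p where p: "is_path V E p" "hd p = x" "last p = y"
      using T x y unfolding is_tree_def connected_graph_def by blast
    have lp: "l \<notin> set p" using path_avoid_leaf[OF fin p(1) dl] p x y by auto
    have "is_path (V - {l}) (E - {f}) p"
      unfolding is_path_def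
    proof (intro conjI)
      show "p \<noteq> []" "distinct p" using p by (auto simp: is_path_def)
      show "set p \<subseteq> V - {l}" using p lp by (auto simp: is_path_def)
      show "set (walk_edges p) \<subseteq> E - {f}"
      proof
        fix e assume e: "e \<in> set (walk_edges p)"
        then have "e \<in> E" using p by (auto simp: is_path_def)
        moreover have "e \<noteq> f" using walk_edges_sub[OF e] lp lf by blast
        ultimately show "e \<in> E - {f}" by simp
      qed
    qed
    then show "\<exists>p. is_path (V - {l}) (E - {f}) p \<and> hd p = x \<and> last p = y" using p by blast
  qed
  moreover have "\<not> (\<exists>c. is_cycle (V - {l}) (E - {f}) c)"
  proof
    assume "\<exists>c. is_cycle (V - {l}) (E - {f}) c"
    then obtain c where "is_cycle (V - {l}) (E - {f}) c" by blast
    then have "is_cycle V E c" unfolding is_cycle_def using is_path_mono[of "V - {l}" "E - {f}" c V E] by auto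
    then show False using T unfolding is_tree_def by blast
  qed
  ultimately show "is_tree (V - {l}) (E - {f})" unfolding is_tree_def by blast
qed

lemma card_walk_mono:
  "S0 \<subseteq> S \<Longrightarrow> card (set (walk_edges p) \<inter> S0) \<le> card (set (walk_edges p) \<inter> S)"
  by (intro card_mono) auto

lemma main_bound:
  "is_tree V E \<Longrightarrow> edge_gp_set V E S \<Longrightarrow> card S \<le> card (pendant_edges V E)"
proof (induction "card V" arbitrary: V E S rule: less_induct)
  case less
  note T = less.prems(1)
  have sg: "simple_graph V E" using T unfolding is_tree_def by simp
  have fV: "finite V" using sg unfolding simple_graph_def by simp
  have finE: "finite E" using sg by (rule simple_finite_E)
  have G: "S \<subseteq> E" "\<And>p. is_path V E p \<Longrightarrow> card (set (walk_edges p) \<inter> S) \<le> 2"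
    using less.prems(2) tree_gp_iff[OF T] by auto
  obtain v where v: "v \<in> V" using T unfolding is_tree_def by blast
  show ?case
  proof (cases "\<exists>u\<in>V. u \<noteq> v")
    case False
    have "E = {}"
    proof (rule ccontr)
      assume "E \<noteq> {}"
      then obtain e where "e \<in> E" by blast
      then obtain a b where "a \<noteq> b" "a \<in> V" "b \<in> V" using sg unfolding simple_graph_def by blast
      then show False using False by metis
    qed
    then have "S = {}" using G by blast
    then show ?thesis by simp
  next
    case True
    then obtain u where u: "u \<in> V" "u \<noteq> v" by blast
    obtain l where lV: "l \<in> V" and dl: "degree E l = 1" using exists_leaf[OF T v u] by blast
    obtain f where fE: "f \<in> E" and lf: "l \<in> f" and uniq: "\<forall>e\<in>E. l \<in> e \<longrightarrow> e = f"
      using dl degree_1_iff[OF finE] by blast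
    obtain w where fw: "f = {l, w}" and wl: "w \<noteq> l" and wV: "w \<in> V"
    proof -
      obtain a b where "f = {a, b}" "a \<noteq> b" "a \<in> V" "b \<in> V" using sg fE unfolding simple_graph_def by blast
      then show ?thesis using that lf by (auto simp: insert_commute)
    qed
    define V' where "V' = V - {l}"
    define E' where "E' = E - {f}"
    have T': "is_tree V' E'" and nl: "\<forall>e\<in>E'. l \<notin> e"
      using remove_leaf[OF T lV dl fE lf wV wl] unfolding V'_def E'_def by auto
    have fE': "finite E'" unfolding E'_def using finE by simp
    have cV: "card V' < card V" unfolding V'_def using card_Diff1_less[OF fV lV] .
    let ?L = "pendant_edges V E"
    let ?L' = "pendant_edges V' E'"
    have IH: "\<And>S0. edge_gp_set V' E' S0 \<Longrightarrow> card S0 \<le> card ?L'"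
      using less.hyps[OF cV T'] by blast
    have pathT: "\<And>p. is_path V' E' p \<Longrightarrow> is_path V E p"
      unfolding V'_def E'_def using is_path_mono by blast
    have transfer: "edge_gp_set V' E' S0" if "S0 \<subseteq> E'" "S0 \<subseteq> S" for S0
      unfolding tree_gp_iff[OF T']
      using that G(2) pathT card_walk_mono[OF that(2)] le_trans by blast
    have fL: "f \<in> ?L" unfolding pendant_edges_def using fE lf lV dl by blast
    have finL: "finite ?L" using finE by (rule finite_subset[rotated]) (auto simp: pendant_edges_def)
    have fnE': "f \<notin> E'" unfolding E'_def by simp
    have degy: "degree E' y = degree E y" if "y \<notin> f" for y
    proof -
      have "{e \<in> E'. y \<in> e} = {e \<in> E. y \<in> e}" unfolding E'_def using that by auto
      then show ?thesis unfolding degree_def by simp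
    qed
    have degw: "degree E w = Suc (degree E' w)"
    proof -
      have "{e \<in> E. w \<in> e} = insert f {e \<in> E'. w \<in> e}" unfolding E'_def using fE fw by auto
      moreover have "f \<notin> {e \<in> E'. w \<in> e}" using fnE' by simp
      moreover have "finite {e \<in> E'. w \<in> e}" using fE' by simp
      ultimately show ?thesis unfolding degree_def by simp
    qed
    have Lsub: "?L' \<subseteq> (?L - {f}) \<union> {e \<in> E'. w \<in> e \<and> degree E w = 2}"
    proof
      fix e assume "e \<in> ?L'"
      then obtain y where e: "e \<in> E'" "y \<in> e" "y \<in> V'" "degree E' y = 1" unfolding pendant_edges_def by blast
      show "e \<in> (?L - {f}) \<union> {e \<in> E'. w \<in> e \<and> degree E w = 2}"
      proof (cases "y = w")
        case True
        then show ?thesis using e degw by simp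
      next
        case False
        then have "y \<notin> f" using e(3) fw unfolding V'_def by auto
        then have "degree E y = 1" using degy e by simp
        then show ?thesis using e fnE' unfolding pendant_edges_def E'_def V'_def by auto
      qed
    qed
    have cL1: "card (?L - {f}) + 1 = card ?L" using fL finL
      by (metis One_nat_def Suc_pred card_Diff_singleton card_gt_0_iff empty_iff add.commute plus_1_eq_Suc)
    have cL': "card ?L' \<le> card (?L - {f}) + card {e \<in> E'. w \<in> e \<and> degree E w = 2}"
    proof -
      have "card ?L' \<le> card ((?L - {f}) \<union> {e \<in> E'. w \<in> e \<and> degree E w = 2})"
        using Lsub finL fE' by (intro card_mono) auto
      also have "\<dots> \<le> card (?L - {f}) + card {e \<in> E'. w \<in> e \<and> degree E w = 2}" by (rule card_Un_le)
      finally show ?thesis .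
    qed
    have cW: "card {e \<in> E'. w \<in> e \<and> degree E w = 2} \<le> (if degree E w = 2 then 1 else 0)"
    proof (cases "degree E w = 2")
      case True
      then have "degree E' w = 1" using degw by simp
      then show ?thesis using True unfolding degree_def by simp
    next
      case False then show ?thesis by simp
    qed
    have LL: "card ?L' \<le> card ?L" using cL' cW cL1 by (simp split: if_splits)
    show ?thesis
    proof (cases "f \<in> S")
      case False
      then have "S \<subseteq> E'" using G(1) unfolding E'_def by blast
      then have "card S \<le> card ?L'" using IH transfer by blast
      then show ?thesis using LL by simp
    next
      case fS: True
      have finS: "finite S" using G(1) finE by (rule finite_subset)
      have cS: "card S = card (S - {f}) + 1" using fS finS
        by (metis One_nat_def Suc_pred card_Diff_singleton card_gt_0_iff empty_iff add.commute plus_1_eq_Suc)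
      show ?thesis
      proof (cases "degree E w = 2")
        case False
        have "S - {f} \<subseteq> E'" using G(1) unfolding E'_def by blast
        then have "card (S - {f}) \<le> card ?L'" using IH transfer by blast
        then show ?thesis using cS cL' cW cL1 False by simp
      next
        case dw2: True
        have "degree E' w = 1" using degw dw2 by simp
        then obtain g where gE: "g \<in> E'" and wg: "w \<in> g" and guniq: "\<forall>e\<in>E'. w \<in> e \<longrightarrow> e = g"
          using degree_1_iff[OF fE'] by blast
        show ?thesis
        proof (cases "g \<in> S")
          case gnS: False
          define S2 where "S2 = insert g (S - {f})"
          have S2E: "S2 \<subseteq> E'" unfolding S2_def using gE G(1) unfolding E'_def by blast
          have "edge_gp_set V' E' S2"
            unfolding tree_gp_iff[OF T']
          proof (intro conjI allI impI)
            show "S2 \<subseteq> E'" by (rule S2E)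
          next
            fix p assume p: "is_path V' E' p"
            let ?W = "set (walk_edges p)"
            have WE: "?W \<subseteq> E'" using p by (simp add: is_path_def)
            show "card (?W \<inter> S2) \<le> 2"
            proof (cases "g \<in> ?W")
              case False
              then have "?W \<inter> S2 \<subseteq> ?W \<inter> S" unfolding S2_def by auto
              then have "card (?W \<inter> S2) \<le> card (?W \<inter> S)" by (intro card_mono) auto
              also have "\<dots> \<le> 2" using G(2) pathT p by blast
              finally show ?thesis .
            next
              case True
              have wp: "w \<in> set p" using walk_edges_sub[OF True] wg by blast
              have "hd p = w \<or> last p = w"
              proof (rule ccontr)
                assume "\<not> ?thesis"
                then have "w \<notin> set p" using path_avoid_leaf[OF fE' p \<open>degree E' w = 1\<close>] by blast
                then show False using wp by simp
              qed
              then obtain p' where p': "is_path V' E' p'" "last p' = w" "set (walk_edges p') = ?W"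
              proof
                assume "last p = w" then show ?thesis using that p by blast
              next
                assume "hd p = w"
                moreover have "p \<noteq> []" using p by (simp add: is_path_def)
                ultimately show ?thesis using that[of "rev p"] is_path_rev[OF p] walk_edges_rev[of p]
                  by (simp add: last_rev)
              qed
              have pne: "p' \<noteq> []" using p' by (simp add: is_path_def)
              have lnp: "l \<notin> set p'" using p' unfolding is_path_def V'_def by blast
              have q: "is_path V E (p' @ [l])"
                using is_path_snoc[OF pathT[OF p'(1)] lV lnp] p' fw fE by (simp add: insert_commute)
              have Wq: "set (walk_edges (p' @ [l])) = insert f ?W"
                using p' pne fw by (simp add: walk_edges_append insert_commute)
              have fW: "f \<notin> ?W" using WE fnE' by blast
              have finW: "finite (?W \<inter> S)" by simp
              have "?W \<inter> S2 = insert g (?W \<inter> S)" unfolding S2_def using True fW by auto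
              then have "card (?W \<inter> S2) = Suc (card (?W \<inter> S))" using gnS finW by simp
              also have "\<dots> = card (insert f ?W \<inter> S)"
              proof -
                have "insert f ?W \<inter> S = insert f (?W \<inter> S)" using fS by auto
                then show ?thesis using fW finW by simp
              qed
              also have "\<dots> \<le> 2" using G(2)[OF q] Wq by simp
              finally show ?thesis .
            qed
          qed
          then have "card S2 \<le> card ?L'" by (rule IH)
          moreover have "card S2 = card S" unfolding S2_def using gnS finS cS by simp
          ultimately show ?thesis using LL by simp
        next
          case gS: True
          have fg: "f \<noteq> g" using gE fnE' by blast
          have Ssub: "S \<subseteq> {f, g}"
          proof
            fix h assume hS: "h \<in> S"
            show "h \<in> {f, g}"
            proof (rule ccontr)
              assume hfg: "h \<notin> {f, g}"
              have hE: "h \<in> E" using hS G(1) by blast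
              obtain a b where ab: "h = {a, b}" "a \<noteq> b" "a \<in> V" "b \<in> V"
                using sg hE unfolding simple_graph_def by blast
              have C: "connected_graph V E" using T unfolding is_tree_def by simp
              obtain r where r: "is_path V E r" "hd r = l" "h \<in> set (walk_edges r)"
                using path_through_edge[OF C _ ab(3,4,2) lV] hE ab(1) by blast
              obtain x2 rest where rs: "r = l # x2 # rest"
                using r by (cases r rule: walk_edges.cases) auto
              have dr: "distinct r" using r by (simp add: is_path_def)
              have e1: "{l, x2} \<in> E" using r(1) rs by (simp add: is_path_def)
              then have "{l, x2} = f" using uniq by blast
              then have x2: "x2 = w" using fw wl by (auto simp: doubleton_eq_iff)
              show False
              proof (cases rest)
                case Nil
                then show False using r(3) rs x2 fw hfg by simp
              next
                case (Cons x3 rest')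
                have e2: "{w, x3} \<in> E" using r(1) rs Cons x2 by (simp add: is_path_def)
                have "x3 \<noteq> l" using dr rs Cons by auto
                then have "l \<notin> {w, x3}" using wl by simp
                then have "{w, x3} \<in> E'" using e2 lf unfolding E'_def by blast
                then have "{w, x3} = g" using guniq by blast
                then have "{f, g, h} \<subseteq> set (walk_edges r) \<inter> S"
                  using r(3) rs Cons x2 fw fS gS hS by auto
                then have "card {f, g, h} \<le> card (set (walk_edges r) \<inter> S)" by (intro card_mono) auto
                also have "\<dots> \<le> 2" using G(2)[OF r(1)] .
                finally have "card {f, g, h} \<le> 2" .
                moreover have "card {f, g, h} = 3" using fg hfg by (auto simp: card_insert_if)
                ultimately show False by simp
              qed
            qed
          qed
          have "card S \<le> 2" using card_le2[OF Ssub] .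
          moreover have "2 \<le> card ?L"
          proof -
            obtain y where y: "y \<in> V" "y \<noteq> l" "degree E y = 1" using exists_leaf[OF T lV wV wl] by blast
            obtain ey where ey: "ey \<in> E" "y \<in> ey" using y(3) degree_1_iff[OF finE] by blast
            have "ey \<noteq> f"
            proof
              assume "ey = f"
              then have "y = w" using ey y fw by auto
              then show False using y dw2 by simp
            qed
            moreover have "ey \<in> ?L" unfolding pendant_edges_def using ey y by blast
            ultimately have "{f, ey} \<subseteq> ?L" using fL by blast
            then have "card {f, ey} \<le> card ?L" using finL by (intro card_mono)
            then show ?thesis using \<open>ey \<noteq> f\<close> by simp
          qed
          ultimately show ?thesis by simp
        qed
      qed
    qed
  qed
qed

theorem theorem3p3:
  fixes V :: "'a set" and E :: "'a set set"
  assumes "is_tree V E"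
  shows "gp_e V E = card (pendant_edges V E)"
proof -
  let ?A = "{card S | S. edge_gp_set V E S}"
  have finE: "finite E" using assms simple_finite_E unfolding is_tree_def by auto
  have "?A \<subseteq> card ` Pow E" unfolding edge_gp_set_def by blast
  then have fin: "finite ?A" by (rule finite_subset) (simp add: finE)
  have mem: "card (pendant_edges V E) \<in> ?A" using pendant_gp[OF assms] by blast
  have ub: "\<forall>x\<in>?A. x \<le> card (pendant_edges V E)" using main_bound[OF assms] by blast
  show ?thesis unfolding gp_e_def
    using fin mem ub by (intro Max_eqI) auto
qed

end
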